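(* Let $m$ be a positive integer and suppose there exists an $m\times m$ panstochastic matrix that is not a convex combination of panmagic permutation matrices. Let $n$ be a positive integer with $\gcd(n,6)=1$. Then there exists an $(mn)\times(mn)$ panstochastic matrix that is not a convex combination of panmagic permutation matrices.
   Context: Rows and columns of $n\times n$ matrices are indexed by $\Omega_n=\{0,\dots,n-1\}$. The $k$th upward (resp. downward) diagonal consists of positions $(i,j)$ with $i+j\equiv k$ (resp. $i-j\equiv k$) $\pmod n$. A real $n\times n$ matrix is panstochastic if its entries are nonnegative and its entries along every row, column, upward diagonal and downward diagonal sum to $1$. A panmagic permutation matrix is a permutation matrix $P_\pi$ ($(i,j)$ entry $1$ if $i=\pi(j)$, else $0$) that is panstochastic. A convex combination is a linear combination with nonnegative coefficients summing to $1$. *)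

theory Defs
  imports "HOL-Analysis.Analysis" "HOL-Combinatorics.Permutations"
begin

text \<open>An n x n real matrix is modelled as a function nat => nat => real;
only the entries with indices in {..<n} are relevant.\<close>

definition panstochastic :: "nat \<Rightarrow> (nat \<Rightarrow> nat \<Rightarrow> real) \<Rightarrow> bool" where
  "panstochastic n A \<longleftrightarrow>
     (\<forall>i<n. \<forall>j<n. A i j \<ge> 0) \<and>
     (\<forall>i<n. (\<Sum>j<n. A i j) = 1) \<and>
     (\<forall>j<n. (\<Sum>i<n. A i j) = 1) \<and>
     (\<forall>k<n. (\<Sum>p\<in>{(i,j). i < n \<and> j < n \<and> (i + j) mod n = k}. A (fst p) (snd p)) = 1) \<and>
     (\<forall>k<n. (\<Sum>p\<in>{(i,j). i < n \<and> j < n \<and> (int i - int j) mod int n = int k}. A (fst p) (snd p)) = 1)"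

definition perm_matrix :: "(nat \<Rightarrow> nat) \<Rightarrow> nat \<Rightarrow> nat \<Rightarrow> real" where
  "perm_matrix \<pi> i j = (if i = \<pi> j then 1 else 0)"

definition panmagic_perm :: "nat \<Rightarrow> (nat \<Rightarrow> nat) \<Rightarrow> bool" where
  "panmagic_perm n \<pi> \<longleftrightarrow> \<pi> permutes {..<n} \<and> panstochastic n (perm_matrix \<pi>)"

definition conv_panmagic :: "nat \<Rightarrow> (nat \<Rightarrow> nat \<Rightarrow> real) \<Rightarrow> bool" where
  "conv_panmagic n A \<longleftrightarrow>
     (\<exists>S c. finite S \<and> (\<forall>\<pi>\<in>S. panmagic_perm n \<pi>) \<and> (\<forall>\<pi>\<in>S. c \<pi> \<ge> 0) \<and>
            (\<Sum>\<pi>\<in>S. c \<pi>) = 1 \<and>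
            (\<forall>i<n. \<forall>j<n. A i j = (\<Sum>\<pi>\<in>S. c \<pi> * perm_matrix \<pi> i j)))"

end

theory Submission
  imports Defs
begin

lemma sum_split_mn:
  fixes f :: "nat \<Rightarrow> 'a::comm_monoid_add"
  shows "(\<Sum>j<m*n. f j) = (\<Sum>b<m. \<Sum>y<n. f (n*b+y))"
proof -
  have "(\<Sum>j<m*n. f j) = (\<Sum>b<m. sum f {b*n..<b*n+n})"
    using sum.nat_group[of f n m] by simp
  also have "\<dots> = (\<Sum>b<m. \<Sum>y<n. f (n*b+y))"
  proof (rule sum.cong[OF refl])
    fix b
    have "{b*n..<b*n+n} = (\<lambda>y. n*b + y) ` {..<n}"
      by (auto simp: mult.commute image_iff, rule_tac x="x - b*n" in bexI, auto)
    moreover have "inj_on (\<lambda>y. n*b + y) {..<n}" by (auto intro: inj_onI)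
    ultimately show "sum f {b*n..<b*n+n} = (\<Sum>y<n. f (n*b+y))"
      by (simp add: sum.reindex)
  qed
  finally show ?thesis .
qed

lemma diag_up:
  assumes "k < N"
  shows "(\<Sum>p\<in>{(i,j). i < N \<and> j < N \<and> (i + j) mod N = k}. f (fst p) (snd p))
       = (\<Sum>j<N. f (nat ((int k - int j) mod int N)) j)"
proof -
  have N: "N > 0" using assms by simp
  have eq: "{(i,j). i < N \<and> j < N \<and> (i + j) mod N = k} = (\<lambda>j. (nat ((int k - int j) mod int N), j)) ` {..<N}"
  proof (rule set_eqI, rule iffI)
    fix p assume "p \<in> {(i,j). i < N \<and> j < N \<and> (i + j) mod N = k}"
    then obtain i j where p: "p = (i,j)" "i < N" "j < N" "(i + j) mod N = k" by auto
    have "int i = (int k - int j) mod int N"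
    proof -
      have "(int i + int j) mod int N = int k" using p(4) by (metis of_nat_add of_nat_mod)
      hence "(int k - int j) mod int N = ((int i + int j) mod int N - int j) mod int N" by simp
      also have "\<dots> = int i mod int N" by (simp add: mod_diff_left_eq)
      also have "\<dots> = int i" using p(2) by simp
      finally show ?thesis by simp
    qed
    then show "p \<in> (\<lambda>j. (nat ((int k - int j) mod int N), j)) ` {..<N}"
      using p by (auto intro!: image_eqI[where x=j])
  next
    fix p assume "p \<in> (\<lambda>j. (nat ((int k - int j) mod int N), j)) ` {..<N}"
    then obtain j where p: "p = (nat ((int k - int j) mod int N), j)" "j < N" by auto
    have lt: "nat ((int k - int j) mod int N) < N" using N by (simp add: nat_less_iff)
    have "int ((nat ((int k - int j) mod int N) + j) mod N) = (((int k - int j) mod int N) + int j) mod int N"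
      using N by (simp add: zmod_int)
    also have "\<dots> = int k mod int N" by (simp add: mod_add_left_eq)
    also have "\<dots> = int k" using assms by simp
    finally have "(nat ((int k - int j) mod int N) + j) mod N = k" by linarith
    then show "p \<in> {(i,j). i < N \<and> j < N \<and> (i + j) mod N = k}" using p lt by auto
  qed
  have inj: "inj_on (\<lambda>j. (nat ((int k - int j) mod int N), j)) {..<N}" by (auto intro: inj_onI)
  show ?thesis unfolding eq by (simp add: sum.reindex[OF inj])
qed

lemma diag_down:
  assumes "k < N"
  shows "(\<Sum>p\<in>{(i,j). i < N \<and> j < N \<and> (int i - int j) mod int N = int k}. f (fst p) (snd p))
       = (\<Sum>j<N. f (nat ((int j + int k) mod int N)) j)"
proof -
  have N: "N > 0" using assms by simp
  have eq: "{(i,j). i < N \<and> j < N \<and> (int i - int j) mod int N = int k} = (\<lambda>j. (nat ((int j + int k) mod int N), j)) ` {..<N}"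
  proof (rule set_eqI, rule iffI)
    fix p assume "p \<in> {(i,j). i < N \<and> j < N \<and> (int i - int j) mod int N = int k}"
    then obtain i j where p: "p = (i,j)" "i < N" "j < N" "(int i - int j) mod int N = int k" by auto
    have "int i = (int j + int k) mod int N"
    proof -
      have "(int j + int k) mod int N = (int j + (int i - int j) mod int N) mod int N" using p(4) by simp
      also have "\<dots> = int i mod int N" by (simp add: mod_add_right_eq)
      also have "\<dots> = int i" using p(2) by simp
      finally show ?thesis by simp
    qed
    then show "p \<in> (\<lambda>j. (nat ((int j + int k) mod int N), j)) ` {..<N}"
      using p by (auto intro!: image_eqI[where x=j])
  next
    fix p assume "p \<in> (\<lambda>j. (nat ((int j + int k) mod int N), j)) ` {..<N}"
    then obtain j where p: "p = (nat ((int j + int k) mod int N), j)" "j < N" by auto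
    have lt: "nat ((int j + int k) mod int N) < N" using N by (simp add: nat_less_iff)
    have "(int (nat ((int j + int k) mod int N)) - int j) mod int N = ((int j + int k) mod int N - int j) mod int N"
      using N by simp
    also have "\<dots> = int k mod int N" by (simp add: mod_diff_left_eq)
    also have "\<dots> = int k" using assms by simp
    finally show "p \<in> {(i,j). i < N \<and> j < N \<and> (int i - int j) mod int N = int k}" using p lt by auto
  qed
  have inj: "inj_on (\<lambda>j. (nat ((int j + int k) mod int N), j)) {..<N}" by (auto intro: inj_onI)
  show ?thesis unfolding eq by (simp add: sum.reindex[OF inj])
qed

lemma pan_char:
  assumes N: "N > 0"
  shows "panstochastic N A \<longleftrightarrow>
     (\<forall>i<N. \<forall>j<N. A i j \<ge> 0) \<and>
     (\<forall>i<N. (\<Sum>j<N. A i j) = 1) \<and>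
     (\<forall>j<N. (\<Sum>i<N. A i j) = 1) \<and>
     (\<forall>k::int. (\<Sum>j<N. A (nat ((k - int j) mod int N)) j) = 1) \<and>
     (\<forall>k::int. (\<Sum>j<N. A (nat ((int j + k) mod int N)) j) = 1)"
proof -
  have up: "(\<forall>k<N. (\<Sum>p\<in>{(i,j). i < N \<and> j < N \<and> (i + j) mod N = k}. A (fst p) (snd p)) = 1)
     \<longleftrightarrow> (\<forall>k::int. (\<Sum>j<N. A (nat ((k - int j) mod int N)) j) = 1)"
  proof
    assume h: "\<forall>k<N. (\<Sum>p\<in>{(i,j). i < N \<and> j < N \<and> (i + j) mod N = k}. A (fst p) (snd p)) = 1"
    show "\<forall>k::int. (\<Sum>j<N. A (nat ((k - int j) mod int N)) j) = 1"
    proof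
      fix k :: int
      define k' where "k' = nat (k mod int N)"
      have k': "k' < N" "int k' = k mod int N" using N by (auto simp: k'_def nat_less_iff)
      have "(\<Sum>j<N. A (nat ((k - int j) mod int N)) j) = (\<Sum>j<N. A (nat ((int k' - int j) mod int N)) j)"
        using k'(2) by (simp add: mod_diff_left_eq)
      also have "\<dots> = 1" using h k'(1) diag_up[OF k'(1), of A] by simp
      finally show "(\<Sum>j<N. A (nat ((k - int j) mod int N)) j) = 1" .
    qed
  next
    assume h: "\<forall>k::int. (\<Sum>j<N. A (nat ((k - int j) mod int N)) j) = 1"
    show "\<forall>k<N. (\<Sum>p\<in>{(i,j). i < N \<and> j < N \<and> (i + j) mod N = k}. A (fst p) (snd p)) = 1"
      using h diag_up[of _ N A] by simp
  qed
  have down: "(\<forall>k<N. (\<Sum>p\<in>{(i,j). i < N \<and> j < N \<and> (int i - int j) mod int N = int k}. A (fst p) (snd p)) = 1)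
     \<longleftrightarrow> (\<forall>k::int. (\<Sum>j<N. A (nat ((int j + k) mod int N)) j) = 1)"
  proof
    assume h: "\<forall>k<N. (\<Sum>p\<in>{(i,j). i < N \<and> j < N \<and> (int i - int j) mod int N = int k}. A (fst p) (snd p)) = 1"
    show "\<forall>k::int. (\<Sum>j<N. A (nat ((int j + k) mod int N)) j) = 1"
    proof
      fix k :: int
      define k' where "k' = nat (k mod int N)"
      have k': "k' < N" "int k' = k mod int N" using N by (auto simp: k'_def nat_less_iff)
      have "(\<Sum>j<N. A (nat ((int j + k) mod int N)) j) = (\<Sum>j<N. A (nat ((int j + int k') mod int N)) j)"
        using k'(2) by (simp add: mod_add_right_eq)
      also have "\<dots> = 1" using h k'(1) diag_down[OF k'(1), of A] by simp
      finally show "(\<Sum>j<N. A (nat ((int j + k) mod int N)) j) = 1" .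
    qed
  next
    assume h: "\<forall>k::int. (\<Sum>j<N. A (nat ((int j + k) mod int N)) j) = 1"
    show "\<forall>k<N. (\<Sum>p\<in>{(i,j). i < N \<and> j < N \<and> (int i - int j) mod int N = int k}. A (fst p) (snd p)) = 1"
      using h diag_down[of _ N A] by simp
  qed
  show ?thesis unfolding panstochastic_def up down by blast
qed

lemma card_one_iff_inj:
  assumes "finite T" "card T = N" "f ` {..<N} \<subseteq> T"
  shows "inj_on f {..<N} \<longleftrightarrow> (\<forall>t\<in>T. card {j\<in>{..<N}. f j = t} = 1)"
proof
  assume inj: "inj_on f {..<N}"
  have img: "f ` {..<N} = T"
    using card_subset_eq[OF assms(1) assms(3)] card_image[OF inj] assms(2) by simp
  show "\<forall>t\<in>T. card {j\<in>{..<N}. f j = t} = 1"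
  proof
    fix t assume "t \<in> T"
    then obtain j where j: "j < N" "f j = t" using img by force
    have "{j\<in>{..<N}. f j = t} = {j}" using j inj by (auto dest: inj_onD)
    then show "card {j\<in>{..<N}. f j = t} = 1" by simp
  qed
next
  assume h: "\<forall>t\<in>T. card {j\<in>{..<N}. f j = t} = 1"
  show "inj_on f {..<N}"
  proof (rule inj_onI, rule ccontr)
    fix a b assume ab: "a \<in> {..<N}" "b \<in> {..<N}" "f a = f b" "a \<noteq> b"
    have t: "f a \<in> T" using ab assms(3) by auto
    have "{a,b} \<subseteq> {j\<in>{..<N}. f j = f a}" using ab by auto
    hence "card {a,b} \<le> card {j\<in>{..<N}. f j = f a}" by (intro card_mono) auto
    then show False using h t ab(4) by auto
  qed
qed

lemma perm_sum_card:
  "(\<Sum>j<N. perm_matrix \<pi> (g j) j) = real (card {j\<in>{..<N}. g j = \<pi> j})"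
  unfolding perm_matrix_def by (simp add: sum.If_cases Int_def)

lemma mod_eq_lemma1:
  fixes p k j N :: int
  assumes "0 \<le> p" "p < N"
  shows "p = (k - j) mod N \<longleftrightarrow> (p + j) mod N = k mod N"
proof
  assume "p = (k - j) mod N"
  then show "(p + j) mod N = k mod N" by (simp add: mod_add_left_eq)
next
  assume h: "(p + j) mod N = k mod N"
  have "(k - j) mod N = (k mod N - j) mod N" by (simp add: mod_diff_left_eq)
  also have "\<dots> = ((p + j) mod N - j) mod N" using h by simp
  also have "\<dots> = p mod N" by (simp add: mod_diff_left_eq)
  also have "\<dots> = p" using assms by simp
  finally show "p = (k - j) mod N" by simp
qed

lemma mod_eq_lemma2:
  fixes p k j N :: int
  assumes "0 \<le> p" "p < N"
  shows "p = (j + k) mod N \<longleftrightarrow> (p - j) mod N = k mod N"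
proof
  assume "p = (j + k) mod N"
  then show "(p - j) mod N = k mod N" by (simp add: mod_diff_left_eq)
next
  assume h: "(p - j) mod N = k mod N"
  have "(j + k) mod N = (j + k mod N) mod N" by (simp add: mod_add_right_eq)
  also have "\<dots> = (j + (p - j) mod N) mod N" using h by simp
  also have "\<dots> = p mod N" by (simp add: mod_add_right_eq)
  also have "\<dots> = p" using assms by simp
  finally show "p = (j + k) mod N" by simp
qed

lemma perm_char:
  assumes N: "N > 0" and p: "\<pi> permutes {..<N}"
  shows "panstochastic N (perm_matrix \<pi>) \<longleftrightarrow>
    inj_on (\<lambda>j. (int (\<pi> j) + int j) mod int N) {..<N} \<and>
    inj_on (\<lambda>j. (int (\<pi> j) - int j) mod int N) {..<N}"
proof -
  have lt: "\<pi> j < N" if "j < N" for j using permutes_in_image[OF p, of j] that by simp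
  have nonneg: "\<forall>i<N. \<forall>j<N. perm_matrix \<pi> i j \<ge> 0" by (simp add: perm_matrix_def)
  have rows: "\<forall>i<N. (\<Sum>j<N. perm_matrix \<pi> i j) = 1"
  proof (intro allI impI)
    fix i assume i: "i < N"
    define j where "j = inv \<pi> i"
    have j1: "\<pi> j = i" unfolding j_def using permutes_inverses(1)[OF p] by simp
    have jN: "j < N" unfolding j_def using permutes_in_image[OF permutes_inv[OF p]] i by simp
    have "{j\<in>{..<N}. i = \<pi> j} = {j}" using j1 jN permutes_inj[OF p] by (auto dest: injD)
    then show "(\<Sum>j<N. perm_matrix \<pi> i j) = 1" using perm_sum_card[where g="\<lambda>_. i" and N=N and \<pi>=\<pi>] by simp
  qed
  have cols: "\<forall>j<N. (\<Sum>i<N. perm_matrix \<pi> i j) = 1"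
    using lt by (simp add: perm_matrix_def)
  let ?T = "{0..<int N}"
  let ?fu = "\<lambda>j. (int (\<pi> j) + int j) mod int N"
  let ?fd = "\<lambda>j. (int (\<pi> j) - int j) mod int N"
  have Tfin: "finite ?T" "card ?T = N" by auto
  have fu_img: "?fu ` {..<N} \<subseteq> ?T" using N by auto
  have fd_img: "?fd ` {..<N} \<subseteq> ?T" using N by auto
  have setu: "{j\<in>{..<N}. nat ((k - int j) mod int N) = \<pi> j} = {j\<in>{..<N}. ?fu j = k mod int N}" for k
  proof -
    have "nat ((k - int j) mod int N) = \<pi> j \<longleftrightarrow> ?fu j = k mod int N" if "j < N" for j
    proof -
      have "nat ((k - int j) mod int N) = \<pi> j \<longleftrightarrow> int (\<pi> j) = (k - int j) mod int N"
        using N by (auto simp: nat_eq_iff)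
      also have "\<dots> \<longleftrightarrow> ?fu j = k mod int N"
        using mod_eq_lemma1[of "int (\<pi> j)" "int N" k "int j"] lt[OF that] by simp
      finally show ?thesis .
    qed
    then show ?thesis by auto
  qed
  have setd: "{j\<in>{..<N}. nat ((int j + k) mod int N) = \<pi> j} = {j\<in>{..<N}. ?fd j = k mod int N}" for k
  proof -
    have "nat ((int j + k) mod int N) = \<pi> j \<longleftrightarrow> ?fd j = k mod int N" if "j < N" for j
    proof -
      have "nat ((int j + k) mod int N) = \<pi> j \<longleftrightarrow> int (\<pi> j) = (int j + k) mod int N"
        using N by (auto simp: nat_eq_iff)
      also have "\<dots> \<longleftrightarrow> ?fd j = k mod int N"
        using mod_eq_lemma2[of "int (\<pi> j)" "int N" "int j" k] lt[OF that] by simp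
      finally show ?thesis .
    qed
    then show ?thesis by auto
  qed
  have allT: "(\<forall>k::int. P (k mod int N)) \<longleftrightarrow> (\<forall>t\<in>?T. P t)" for P
  proof
    assume "\<forall>k::int. P (k mod int N)"
    then show "\<forall>t\<in>?T. P t" by (metis atLeastLessThan_iff mod_pos_pos_trivial)
  next
    assume "\<forall>t\<in>?T. P t"
    then show "\<forall>k::int. P (k mod int N)" using N by simp
  qed
  have up: "(\<forall>k::int. (\<Sum>j<N. perm_matrix \<pi> (nat ((k - int j) mod int N)) j) = 1) \<longleftrightarrow> inj_on ?fu {..<N}"
    unfolding perm_sum_card setu card_one_iff_inj[OF Tfin fu_img]
    using allT[of "\<lambda>t. card {j\<in>{..<N}. ?fu j = t} = 1"] by simp
  have down: "(\<forall>k::int. (\<Sum>j<N. perm_matrix \<pi> (nat ((int j + k) mod int N)) j) = 1) \<longleftrightarrow> inj_on ?fd {..<N}"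
    unfolding perm_sum_card setd card_one_iff_inj[OF Tfin fd_img]
    using allT[of "\<lambda>t. card {j\<in>{..<N}. ?fd j = t} = 1"] by simp
  show ?thesis unfolding pan_char[OF N] up down using nonneg rows cols by blast
qed

lemma divmod_mn:
  fixes x :: int
  assumes m: "m > 0" and n: "n > 0"
  shows "nat (x mod int (m*n)) div n = nat ((x div int n) mod int m)"
    and "nat (x mod int (m*n)) mod n = nat (x mod int n)"
proof -
  define u where "u = (x div int n) mod int m"
  define r where "r = x mod int n"
  have u: "0 \<le> u" using m by (simp add: u_def)
  have r: "0 \<le> r" "r < int n" using n by (auto simp: r_def)
  have "x mod int (m*n) = x mod (int n * int m)" by (simp add: mult.commute)
  also have "\<dots> = int n * u + r" unfolding u_def r_def by (rule zmod_zmult2_eq) simp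
  finally have e: "nat (x mod int (m*n)) = n * nat u + nat r" using u r by (simp add: nat_add_distrib nat_mult_distrib)
  have nr: "nat r < n" using r by simp
  show "nat (x mod int (m*n)) div n = nat ((x div int n) mod int m)"
    unfolding e u_def[symmetric] using nr n by simp
  show "nat (x mod int (m*n)) mod n = nat (x mod int n)"
    unfolding e r_def[symmetric] using nr n by simp
qed

lemma prod_pan:
  assumes m: "m > 0" and n: "n > 0" and A: "panstochastic m A" and Q: "panstochastic n Q"
  shows "panstochastic (m*n) (\<lambda>i j. A (i div n) (j div n) * Q (i mod n) (j mod n))"
proof -
  let ?B = "\<lambda>i j. A (i div n) (j div n) * Q (i mod n) (j mod n)"
  have mn: "m*n > 0" using m n by simp
  note Ac = A[unfolded pan_char[OF m]] and Qc = Q[unfolded pan_char[OF n]]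
  have dm: "(n*b+y) div n = b" "(n*b+y) mod n = y" if "y < n" for b y using that n by auto
  have lt: "i div n < m" "i mod n < n" if "i < m*n" for i
    using that n by (auto simp: div_less_iff_less_mult mult.commute)
  have nonneg: "\<forall>i<m*n. \<forall>j<m*n. ?B i j \<ge> 0"
    using Ac Qc lt by (auto intro!: mult_nonneg_nonneg)
  have rows: "\<forall>i<m*n. (\<Sum>j<m*n. ?B i j) = 1"
  proof (intro allI impI)
    fix i assume i: "i < m*n"
    have "(\<Sum>j<m*n. ?B i j) = (\<Sum>b<m. \<Sum>y<n. A (i div n) b * Q (i mod n) y)"
      unfolding sum_split_mn by (intro sum.cong refl) (simp add: dm)
    also have "\<dots> = (\<Sum>b<m. A (i div n) b) * (\<Sum>y<n. Q (i mod n) y)"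
      by (simp add: sum_product)
    also have "\<dots> = 1" using Ac Qc lt[OF i] by simp
    finally show "(\<Sum>j<m*n. ?B i j) = 1" .
  qed
  have cols: "\<forall>j<m*n. (\<Sum>i<m*n. ?B i j) = 1"
  proof (intro allI impI)
    fix j assume j: "j < m*n"
    have "(\<Sum>i<m*n. ?B i j) = (\<Sum>a<m. \<Sum>x<n. A a (j div n) * Q x (j mod n))"
      unfolding sum_split_mn by (intro sum.cong refl) (simp add: dm)
    also have "\<dots> = (\<Sum>a<m. A a (j div n)) * (\<Sum>x<n. Q x (j mod n))"
      by (simp add: sum_product)
    also have "\<dots> = 1" using Ac Qc lt[OF j] by simp
    finally show "(\<Sum>i<m*n. ?B i j) = 1" .
  qed
  have up: "\<forall>k::int. (\<Sum>j<m*n. ?B (nat ((k - int j) mod int (m*n))) j) = 1"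
  proof
    fix k :: int
    have e: "?B (nat ((k - int (n*b+y)) mod int (m*n))) (n*b+y)
        = A (nat (((k - int y) div int n - int b) mod int m)) b * Q (nat ((k - int y) mod int n)) y"
      if "y < n" for b y
    proof -
      have x: "k - int (n*b+y) = (k - int y) + (- int b) * int n" by simp
      have "(k - int (n*b+y)) div int n = (k - int y) div int n - int b"
        unfolding x using n div_mult_self1[of "int n" "k - int y" "- int b"] by simp
      moreover have "(k - int (n*b+y)) mod int n = (k - int y) mod int n"
        unfolding x using mod_mult_self1[of "k - int y" "- int b" "int n"] by simp
      ultimately show ?thesis using divmod_mn[OF m n, of "k - int (n*b+y)"] dm[OF that] by simp
    qed
    have "(\<Sum>j<m*n. ?B (nat ((k - int j) mod int (m*n))) j)
        = (\<Sum>b<m. \<Sum>y<n. A (nat (((k - int y) div int n - int b) mod int m)) b * Q (nat ((k - int y) mod int n)) y)"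
      unfolding sum_split_mn by (intro sum.cong refl e) simp
    also have "\<dots> = (\<Sum>y<n. (\<Sum>b<m. A (nat (((k - int y) div int n - int b) mod int m)) b) * Q (nat ((k - int y) mod int n)) y)"
      by (subst sum.swap) (simp add: sum_distrib_right)
    also have "\<dots> = (\<Sum>y<n. Q (nat ((k - int y) mod int n)) y)"
      using Ac by simp
    also have "\<dots> = 1" using Qc by simp
    finally show "(\<Sum>j<m*n. ?B (nat ((k - int j) mod int (m*n))) j) = 1" .
  qed
  have down: "\<forall>k::int. (\<Sum>j<m*n. ?B (nat ((int j + k) mod int (m*n))) j) = 1"
  proof
    fix k :: int
    have e: "?B (nat ((int (n*b+y) + k) mod int (m*n))) (n*b+y)
        = A (nat ((int b + (int y + k) div int n) mod int m)) b * Q (nat ((int y + k) mod int n)) y"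
      if "y < n" for b y
    proof -
      have x: "int (n*b+y) + k = (int y + k) + int b * int n" by simp
      have "(int (n*b+y) + k) div int n = int b + (int y + k) div int n"
        unfolding x using n by simp
      moreover have "(int (n*b+y) + k) mod int n = (int y + k) mod int n"
        unfolding x using n by simp
      ultimately show ?thesis using divmod_mn[OF m n, of "int (n*b+y) + k"] dm[OF that] by simp
    qed
    have "(\<Sum>j<m*n. ?B (nat ((int j + k) mod int (m*n))) j)
        = (\<Sum>b<m. \<Sum>y<n. A (nat ((int b + (int y + k) div int n) mod int m)) b * Q (nat ((int y + k) mod int n)) y)"
      unfolding sum_split_mn by (intro sum.cong refl e) simp
    also have "\<dots> = (\<Sum>y<n. (\<Sum>b<m. A (nat ((int b + (int y + k) div int n) mod int m)) b) * Q (nat ((int y + k) mod int n)) y)"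
      by (subst sum.swap) (simp add: sum_distrib_right)
    also have "\<dots> = (\<Sum>y<n. Q (nat ((int y + k) mod int n)) y)"
      using Ac by simp
    also have "\<dots> = 1" using Qc by simp
    finally show "(\<Sum>j<m*n. ?B (nat ((int j + k) mod int (m*n))) j) = 1" .
  qed
  show ?thesis unfolding pan_char[OF mn] using nonneg rows cols up down by blast
qed

lemma inj_mult_mod:
  assumes "coprime c n"
  shows "inj_on (\<lambda>y::nat. (c*y) mod n) {..<n}"
proof (rule inj_onI)
  fix x y assume xy: "x \<in> {..<n}" "y \<in> {..<n}" "(c*x) mod n = (c*y) mod n"
  have h0: "int ((c*x) mod n) = int ((c*y) mod n)" using xy(3) by simp
  have "int (c*x) mod int n = int (c*y) mod int n" using h0 by (simp only: of_nat_mod)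
  hence "int n dvd int c * (int x - int y)" by (simp add: mod_eq_dvd_iff right_diff_distrib)
  moreover have "coprime (int n) (int c)" using assms by (simp add: coprime_commute)
  ultimately have d: "int n dvd (int x - int y)" using coprime_dvd_mult_right_iff by blast
  show "x = y"
  proof (rule ccontr)
    assume "x \<noteq> y"
    hence "int x - int y \<noteq> 0" by simp
    from dvd_imp_le_int[OF this d] have "int n \<le> \<bar>int x - int y\<bar>" by simp
    then show False using xy(1,2) by (simp add: abs_if split: if_splits)
  qed
qed

lemma exists_q:
  assumes n: "n > 0" and g: "gcd n 6 = 1"
  shows "panmagic_perm n (\<lambda>y. if y < n then (2*y) mod n else y)"
proof -
  let ?q = "\<lambda>y. if y < n then (2*y) mod n else y"
  have g2: "gcd n 2 dvd 1" and g3: "gcd n 3 dvd 1"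
  proof -
    have "(2::nat) dvd 6" "(3::nat) dvd 6" by simp_all
    then have "gcd n 2 dvd gcd n 6" "gcd n 3 dvd gcd n 6"
      by (auto intro!: gcd_greatest intro: dvd_trans[OF gcd_dvd2])
    then show "gcd n 2 dvd 1" "gcd n 3 dvd 1" using g by simp_all
  qed
  have c2: "coprime 2 n" and c3: "coprime 3 n" using g2 g3
    by (simp_all add: coprime_iff_gcd_eq_1 gcd.commute)
  have inj2: "inj_on ?q {..<n}"
  proof (rule inj_onI)
    fix x y assume xy: "x \<in> {..<n}" "y \<in> {..<n}" "?q x = ?q y"
    then have "(2*x) mod n = (2*y) mod n" by simp
    then show "x = y" using inj_mult_mod[OF c2] xy(1,2) by (meson inj_onD)
  qed
  have img: "?q ` {..<n} \<subseteq> {..<n}" using n by auto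
  have perm: "?q permutes {..<n}"
  proof (rule bij_imp_permutes)
    show "bij_betw ?q {..<n} {..<n}"
      unfolding bij_betw_def using inj2 endo_inj_surj[OF finite_lessThan img inj2] by blast
  next
    fix x assume "x \<notin> {..<n}" then show "?q x = x" by simp
  qed
  have eu: "(int (?q y) + int y) mod int n = int ((3*y) mod n)" if "y < n" for y
  proof -
    have "(int (?q y) + int y) mod int n = ((2 * int y) mod int n + int y) mod int n"
      using that by (simp add: of_nat_mod)
    also have "\<dots> = (3 * int y) mod int n" by (simp add: mod_add_left_eq)
    also have "\<dots> = int ((3*y) mod n)" by (simp add: of_nat_mod)
    finally show ?thesis .
  qed
  have ed: "(int (?q y) - int y) mod int n = int y" if "y < n" for y
  proof -
    have "(int (?q y) - int y) mod int n = ((2 * int y) mod int n - int y) mod int n"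
      using that by (simp add: of_nat_mod)
    also have "\<dots> = (int y) mod int n" by (simp add: mod_diff_left_eq)
    also have "\<dots> = int y" using that by simp
    finally show ?thesis .
  qed
  have iu: "inj_on (\<lambda>j. (int (?q j) + int j) mod int n) {..<n}"
  proof (rule inj_onI)
    fix x y assume xy: "x \<in> {..<n}" "y \<in> {..<n}" "(int (?q x) + int x) mod int n = (int (?q y) + int y) mod int n"
    hence "(3*x) mod n = (3*y) mod n" using eu[of x] eu[of y] xy(1,2) by simp
    thus "x = y" using inj_mult_mod[OF c3] xy(1,2) by (meson inj_onD)
  qed
  have id: "inj_on (\<lambda>j. (int (?q j) - int j) mod int n) {..<n}"
  proof (rule inj_onI)
    fix x y assume xy: "x \<in> {..<n}" "y \<in> {..<n}" "(int (?q x) - int x) mod int n = (int (?q y) - int y) mod int n"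
    then show "x = y" using ed[of x] ed[of y] by simp
  qed
  show ?thesis unfolding panmagic_perm_def using perm perm_char[OF n perm] iu id by blast
qed

lemma alpha_panmagic:
  assumes m: "m > 0" and n: "n > 0" and p: "panmagic_perm (m*n) \<pi>"
    and z: "\<And>b. b < m \<Longrightarrow> \<pi> (n*b) mod n = 0"
  shows "panmagic_perm m (\<lambda>b. if b < m then \<pi> (n*b) div n else b)"
proof -
  let ?a = "\<lambda>b. if b < m then \<pi> (n*b) div n else b"
  have mn: "m*n > 0" using m n by simp
  have pp: "\<pi> permutes {..<m*n}" using p by (simp add: panmagic_perm_def)
  have pc: "inj_on (\<lambda>j. (int (\<pi> j) + int j) mod int (m*n)) {..<m*n}"
           "inj_on (\<lambda>j. (int (\<pi> j) - int j) mod int (m*n)) {..<m*n}"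
    using p perm_char[OF mn pp] by (simp_all add: panmagic_perm_def)
  have nb: "n*b < m*n" if "b < m" for b using that n by simp
  have plt: "\<pi> (n*b) < m*n" if "b < m" for b using permutes_in_image[OF pp] nb[OF that] by simp
  have pa: "\<pi> (n*b) = n * ?a b" if "b < m" for b
    using z[OF that] that div_mult_mod_eq[of "\<pi> (n*b)" n] by (simp add: mult.commute)
  have alt: "?a b < m" if "b < m" for b
    using plt[OF that] that n by (simp add: div_less_iff_less_mult)
  have img: "?a ` {..<m} \<subseteq> {..<m}" using alt by auto
  have pinj: "inj_on \<pi> {..<m*n}" using permutes_inj[OF pp] by (simp add: inj_on_def inj_def)
  have nbinj: "n*x = n*y \<Longrightarrow> x = y" for x y using n by simp
  have inj: "inj_on ?a {..<m}"
  proof (rule inj_onI)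
    fix x y assume xy: "x \<in> {..<m}" "y \<in> {..<m}" "?a x = ?a y"
    hence "\<pi> (n*x) = \<pi> (n*y)" using pa[of x] pa[of y] by simp
    from inj_onD[OF pinj this] have "n*x = n*y" using nb[of x] nb[of y] xy(1,2) by simp
    thus "x = y" using nbinj by blast
  qed
  have perm: "?a permutes {..<m}"
  proof (rule bij_imp_permutes)
    show "bij_betw ?a {..<m} {..<m}"
      unfolding bij_betw_def using inj endo_inj_surj[OF finite_lessThan img inj] by blast
  next
    fix x assume "x \<notin> {..<m}" then show "?a x = x" by simp
  qed
  have scale: "(int n * u) mod int (m*n) = int n * (u mod int m)" for u :: int
    by (simp add: mult.commute[of m n] mod_mult_mult1)
  have iu: "inj_on (\<lambda>j. (int (?a j) + int j) mod int m) {..<m}"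
  proof (rule inj_onI)
    fix x y assume xy: "x \<in> {..<m}" "y \<in> {..<m}"
      "(int (?a x) + int x) mod int m = (int (?a y) + int y) mod int m"
    have e: "(int (\<pi> (n*b)) + int (n*b)) mod int (m*n) = int n * ((int (?a b) + int b) mod int m)"
      if "b < m" for b
    proof -
      have "int (\<pi> (n*b)) + int (n*b) = int n * (int (?a b) + int b)"
        using pa[OF that] by (simp add: algebra_simps)
      thus ?thesis using scale by simp
    qed
    have "(int (\<pi> (n*x)) + int (n*x)) mod int (m*n) = (int (\<pi> (n*y)) + int (n*y)) mod int (m*n)"
      using e[of x] e[of y] xy by simp
    from inj_onD[OF pc(1) this] have "n*x = n*y" using nb[of x] nb[of y] xy(1,2) by simp
    thus "x = y" using nbinj by blast
  qed
  have id: "inj_on (\<lambda>j. (int (?a j) - int j) mod int m) {..<m}"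
  proof (rule inj_onI)
    fix x y assume xy: "x \<in> {..<m}" "y \<in> {..<m}"
      "(int (?a x) - int x) mod int m = (int (?a y) - int y) mod int m"
    have e: "(int (\<pi> (n*b)) - int (n*b)) mod int (m*n) = int n * ((int (?a b) - int b) mod int m)"
      if "b < m" for b
    proof -
      have "int (\<pi> (n*b)) - int (n*b) = int n * (int (?a b) - int b)"
        using pa[OF that] by (simp add: algebra_simps)
      thus ?thesis using scale by simp
    qed
    have "(int (\<pi> (n*x)) - int (n*x)) mod int (m*n) = (int (\<pi> (n*y)) - int (n*y)) mod int (m*n)"
      using e[of x] e[of y] xy by simp
    from inj_onD[OF pc(2) this] have "n*x = n*y" using nb[of x] nb[of y] xy(1,2) by simp
    thus "x = y" using nbinj by blast
  qed
  show ?thesis unfolding panmagic_perm_def using perm perm_char[OF m perm] iu id by blast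
qed

theorem lemma4p2:
  fixes m n :: nat
  assumes "m > 0"
    and "\<exists>A. panstochastic m A \<and> \<not> conv_panmagic m A"
    and "n > 0"
    and "gcd n 6 = 1"
  shows "\<exists>B. panstochastic (m * n) B \<and> \<not> conv_panmagic (m * n) B"
proof -
  have m: "m > 0" and n: "n > 0" using assms by auto
  obtain A where A: "panstochastic m A" and nA: "\<not> conv_panmagic m A" using assms(2) by blast
  define q where "q = (\<lambda>y. if y < n then (2*y) mod n else y)"
  have qp: "panmagic_perm n q" unfolding q_def by (rule exists_q[OF n assms(4)])
  have q0: "q 0 = 0" using n by (simp add: q_def)
  define Q where "Q = perm_matrix q"
  have Qp: "panstochastic n Q" using qp by (simp add: panmagic_perm_def Q_def)
  define B where "B = (\<lambda>i j. A (i div n) (j div n) * Q (i mod n) (j mod n))"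
  have Bp: "panstochastic (m*n) B" unfolding B_def by (rule prod_pan[OF m n A Qp])
  have "\<not> conv_panmagic (m*n) B"
  proof
    assume "conv_panmagic (m*n) B"
    then obtain S c where S: "finite S" "\<forall>\<pi>\<in>S. panmagic_perm (m*n) \<pi>" "\<forall>\<pi>\<in>S. c \<pi> \<ge> 0"
      "(\<Sum>\<pi>\<in>S. c \<pi>) = 1" "\<forall>i<m*n. \<forall>j<m*n. B i j = (\<Sum>\<pi>\<in>S. c \<pi> * perm_matrix \<pi> i j)"
      unfolding conv_panmagic_def by blast
    define S' where "S' = {\<pi>\<in>S. c \<pi> \<noteq> 0}"
    have S'S: "S' \<subseteq> S" and fS': "finite S'" using S(1) by (auto simp: S'_def)
    have cpos: "c \<pi> > 0" if "\<pi> \<in> S'" for \<pi> using that S(3) by (auto simp: S'_def less_le)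
    have nb: "n*b < m*n" if "b < m" for b using that n by simp
    have Bnb: "B i (n*b) = A (i div n) b * Q (i mod n) 0" if "b < m" for i b
      using n by (simp add: B_def)
    have z: "\<pi> (n*b) mod n = 0" if \<pi>: "\<pi> \<in> S'" and b: "b < m" for \<pi> b
    proof (rule ccontr)
      assume ne: "\<pi> (n*b) mod n \<noteq> 0"
      let ?i = "\<pi> (n*b)"
      have pS: "\<pi> \<in> S" using \<pi> S'S by blast
      have pp: "\<pi> permutes {..<m*n}" using S(2) pS by (simp add: panmagic_perm_def)
      have iN: "?i < m*n" using permutes_in_image[OF pp] nb[OF b] by simp
      have "B ?i (n*b) = 0" using Bnb[OF b] ne q0 by (simp add: Q_def perm_matrix_def)
      moreover have "B ?i (n*b) = (\<Sum>\<sigma>\<in>S. c \<sigma> * perm_matrix \<sigma> ?i (n*b))"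
        using S(5) iN nb[OF b] by blast
      moreover have "c \<pi> * perm_matrix \<pi> ?i (n*b) \<le> (\<Sum>\<sigma>\<in>S. c \<sigma> * perm_matrix \<sigma> ?i (n*b))"
        by (rule member_le_sum[OF pS]) (use S(3) in \<open>auto simp: perm_matrix_def\<close>, rule S(1))
      moreover have "c \<pi> * perm_matrix \<pi> ?i (n*b) = c \<pi>" by (simp add: perm_matrix_def)
      ultimately show False using cpos[OF \<pi>] by linarith
    qed
    define \<alpha> where "\<alpha> = (\<lambda>\<pi>. \<lambda>b. if b < m then \<pi> (n*b) div n else b)"
    have apm: "panmagic_perm m (\<alpha> \<pi>)" if "\<pi> \<in> S'" for \<pi>
    proof -
      have "panmagic_perm (m*n) \<pi>" using S(2) S'S that by blast
      from alpha_panmagic[OF m n this z[OF that]] show ?thesis unfolding \<alpha>_def .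
    qed
    have pa: "\<pi> (n*b) = n * \<alpha> \<pi> b" if "\<pi> \<in> S'" "b < m" for \<pi> b
      using z[OF that] that div_mult_mod_eq[of "\<pi> (n*b)" n] by (simp add: \<alpha>_def mult.commute)
    have Aeq: "A a b = (\<Sum>\<pi>\<in>S'. c \<pi> * perm_matrix (\<alpha> \<pi>) a b)" if a: "a < m" and b: "b < m" for a b
    proof -
      have "A a b = B (n*a) (n*b)" using n q0 by (simp add: B_def Q_def perm_matrix_def)
      also have "\<dots> = (\<Sum>\<pi>\<in>S. c \<pi> * perm_matrix \<pi> (n*a) (n*b))" using S(5) nb a b by blast
      also have "\<dots> = (\<Sum>\<pi>\<in>S'. c \<pi> * perm_matrix \<pi> (n*a) (n*b))"
        by (rule sum.mono_neutral_right[OF S(1) S'S]) (auto simp: S'_def)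
      also have "\<dots> = (\<Sum>\<pi>\<in>S'. c \<pi> * perm_matrix (\<alpha> \<pi>) a b)"
      proof (rule sum.cong[OF refl])
        fix \<pi> assume "\<pi> \<in> S'"
        then have "perm_matrix \<pi> (n*a) (n*b) = perm_matrix (\<alpha> \<pi>) a b"
          using pa[of \<pi> b] b n by (simp add: perm_matrix_def)
        then show "c \<pi> * perm_matrix \<pi> (n*a) (n*b) = c \<pi> * perm_matrix (\<alpha> \<pi>) a b" by simp
      qed
      finally show ?thesis .
    qed
    define T where "T = \<alpha> ` S'"
    define d where "d = (\<lambda>\<tau>. \<Sum>\<pi>\<in>{\<pi>\<in>S'. \<alpha> \<pi> = \<tau>}. c \<pi>)"
    have "conv_panmagic m A"
      unfolding conv_panmagic_def
    proof (intro exI conjI ballI allI impI)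
      show "finite T" using fS' by (simp add: T_def)
      show "panmagic_perm m \<tau>" if "\<tau> \<in> T" for \<tau> using that apm by (auto simp: T_def)
      show "d \<tau> \<ge> 0" if "\<tau> \<in> T" for \<tau>
        unfolding d_def using S(3) S'S by (intro sum_nonneg) auto
      have "(\<Sum>\<tau>\<in>T. d \<tau>) = (\<Sum>\<pi>\<in>S'. c \<pi>)"
        unfolding T_def d_def by (rule sum.image_gen[OF fS', symmetric])
      also have "\<dots> = (\<Sum>\<pi>\<in>S. c \<pi>)"
        by (rule sum.mono_neutral_left[OF S(1) S'S]) (auto simp: S'_def)
      finally show "(\<Sum>\<tau>\<in>T. d \<tau>) = 1" using S(4) by simp
      fix a b assume a: "a < m" and b: "b < m"
      have "(\<Sum>\<pi>\<in>S'. c \<pi> * perm_matrix (\<alpha> \<pi>) a b)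
          = (\<Sum>\<tau>\<in>T. \<Sum>\<pi>\<in>{\<pi>\<in>S'. \<alpha> \<pi> = \<tau>}. c \<pi> * perm_matrix (\<alpha> \<pi>) a b)"
        unfolding T_def by (rule sum.image_gen[OF fS'])
      also have "\<dots> = (\<Sum>\<tau>\<in>T. d \<tau> * perm_matrix \<tau> a b)"
        unfolding d_def sum_distrib_right by (intro sum.cong refl) auto
      finally show "A a b = (\<Sum>\<tau>\<in>T. d \<tau> * perm_matrix \<tau> a b)" using Aeq[OF a b] by simp
    qed
    then show False using nA by contradiction
  qed
  then show ?thesis using Bp by blast
qed

end
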